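(* Let $\mathsf{G}$ and $\mathsf{G}'$ be well-formed global types and let $\mathsf{N}$ be a network such that $\vdash \mathsf{N} : \mathsf{G}$ and $\vdash \mathsf{N} : \mathsf{G}'$. Then $\mathcal{S}(\mathsf{G})=\mathcal{S}(\mathsf{G}')$, i.e., the two event structures have the same set of events and the same causality and conflict relations.
   Context: Participants are ranged over by $\mathsf{p},\mathsf{q},\mathsf{r},\mathsf{s}$ and message labels by $\lambda$. All processes and global types below are defined coinductively and are assumed regular (finitely many distinct subterms). Processes: $P ::= \bigoplus_{i\in I}\mathsf{p}!\lambda_i;P_i \mid \sum_{i\in I}\mathsf{p}?\lambda_i;P_i \mid \mathbf{0}$, with $I$ finite non-empty and the $\lambda_i$ pairwise distinct. A network is $\mathsf{N}=\mathsf{p}_1[\![P_1]\!]\parallel\cdots\parallel\mathsf{p}_n[\![P_n]\!]$ with $n\ge 1$ and the $\mathsf{p}_h$ pairwise distinct. Global types: $\mathsf{G} ::= \mathsf{p}\to\mathsf{q}:\{\lambda_i;\mathsf{G}_i\}_{i\in I} \mid \mathsf{End}$, with $I$ finite non-empty and the $\lambda_i$ pairwise distinct. A communication is $\alpha=\mathsf{p}\mathsf{q}\lambda$ (meaning $\mathsf{p}$ sends $\lambda$ to $\mathsf{q}$), with $\mathrm{part}(\mathsf{p}\mathsf{q}\lambda)=\{\mathsf{p},\mathsf{q}\}$; a trace is a finite sequence of communications, $\mathrm{part}$ extended to traces by union. The traces of a global type are: $\mathrm{Tr}(\mathsf{End})=\emptyset$ and $\mathrm{Tr}(\mathsf{p}\to\mathsf{q}:\{\lambda_i;\mathsf{G}_i\}_{i\in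 I})=\{\mathsf{p}\mathsf{q}\lambda_i\cdot\sigma \mid i\in I,\ \sigma=\epsilon \text{ or } \sigma\in\mathrm{Tr}(\mathsf{G}_i)\}$. $\mathrm{part}(\mathsf{G})=\bigcup_{\sigma\in\mathrm{Tr}(\mathsf{G})}\mathrm{part}(\sigma)$. Projection (coinductive, partial): $\mathsf{G}\upharpoonright\mathsf{r}=\mathbf{0}$ if $\mathsf{r}\notin\mathrm{part}(\mathsf{G})$; for $\mathsf{G}=\mathsf{p}\to\mathsf{q}:\{\lambda_i;\mathsf{G}_i\}_{i\in I}$: $\mathsf{G}\upharpoonright\mathsf{r}=\sum_{i\in I}\mathsf{p}?\lambda_i;(\mathsf{G}_i\upharpoonright\mathsf{r})$ if $\mathsf{r}=\mathsf{q}$; $=\bigoplus_{i\in I}\mathsf{q}!\lambda_i;(\mathsf{G}_i\upharpoonright\mathsf{r})$ if $\mathsf{r}=\mathsf{p}$; $=\mathsf{G}_1\upharpoonright\mathsf{r}$ if $\mathsf{r}\notin\{\mathsf{p},\mathsf{q}\}$, $\mathsf{r}\in\mathrm{part}(\mathsf{G}_1)$ and $\mathsf{G}_i\upharpoonright\mathsf{r}=\mathsf{G}_1\upharpoonright\mathsf{r}$ for all $i\in I$; undefined otherwise. $\mathsf{G}$ is projectable if $\mathsf{G}\upharpoonright\mathsf{p}$ is defined for all $\mathsf{p}$. Depth: $\mathrm{depth}(\mathsf{p},\sigma)=|\sigma_1\cdot\alpha|$ if $\sigma=\sigma_1\cdot\alpha\cdot\sigma_2$ with $\mathsf{p}\notin\mathrm{part}(\sigma_1)$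 and $\mathsf{p}\in\mathrm{part}(\alpha)$, and $0$ otherwise; $\mathrm{depth}(\mathsf{p},\mathsf{G})=\sup\{\mathrm{depth}(\mathsf{p},\sigma)\mid\sigma\in\mathrm{Tr}(\mathsf{G})\}$. $\mathsf{G}$ is bounded if $\mathrm{depth}(\mathsf{p},\mathsf{G}')$ is finite for every participant $\mathsf{p}$ and every subtree $\mathsf{G}'$ of $\mathsf{G}$. $\mathsf{G}$ is well formed if it is projectable and bounded. Preorder $\le$ on processes: the largest relation such that $\mathbf{0}\le\mathbf{0}$; $\sum_{i\in I\cup J}\mathsf{p}?\lambda_i;P_i\le\sum_{i\in I}\mathsf{p}?\lambda_i;Q_i$ whenever $P_i\le Q_i$ for all $i\in I$; $\bigoplus_{i\in I}\mathsf{p}!\lambda_i;P_i\le\bigoplus_{i\in I}\mathsf{p}!\lambda_i;Q_i$ whenever $P_i\le Q_i$ for all $i\in I$. Typing: $\vdash \prod_{i\in I}\mathsf{p}_i[\![P_i]\!]:\mathsf{G}$ iff $P_i\le\mathsf{G}\upharpoonright\mathsf{p}_i$ for all $i\in I$ and $\mathrm{part}(\mathsf{G})\subseteq\{\mathsf{p}_i\mid i\in I\}$. Event structure of $\mathsf{G}$: permutation equivalence $\sim$ is the least equivalence on traces with $\sigma\cdot\alpha\cdot\alpha'\cdot\sigma'\sim\sigma\cdot\alpha'\cdot\alpha\cdot\sigma'$ whenever $\mathrm{part}(\alpha)\cap\mathrm{part}(\alpha')=\emptyset$; $[\sigma]$ is the class of $\sigma$. A non-empty trace $\sigma=\sigma[1]\cdots\sigma[n]$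 is pointed if for every $1\le i<n$ there is $j$ with $i<j\le n$ and $\mathrm{part}(\sigma[i])\cap\mathrm{part}(\sigma[j])\ne\emptyset$. A g-event is $[\sigma]$ with $\sigma$ pointed. Causal prefixing: $\alpha\circ[\sigma]=[\alpha\cdot\sigma]$ if $\mathrm{part}(\alpha)\cap\mathrm{part}(\sigma)\ne\emptyset$, and $=[\sigma]$ otherwise; $\epsilon\circ\gamma=\gamma$, $(\alpha\cdot\sigma)\circ\gamma=\alpha\circ(\sigma\circ\gamma)$. $\mathrm{ev}(\sigma\cdot\alpha)=\sigma\circ[\alpha]$. Causality: $\gamma\le\gamma'$ if $\gamma=[\sigma]$ and $\gamma'=[\sigma\cdot\sigma']$ for some $\sigma,\sigma'$. Conflict: $\gamma\#\gamma'$ if $\gamma=[\sigma\cdot\mathsf{p}\mathsf{q}\lambda_1\cdot\sigma_1]$ and $\gamma'=[\sigma\cdot\mathsf{p}\mathsf{q}\lambda_2\cdot\sigma_2]$ with $\lambda_1\neq\lambda_2$. Then $\mathcal{S}(\mathsf{G})=(\mathcal{E}(\mathsf{G}),\le_{\mathsf{G}},\#_{\mathsf{G}})$ where $\mathcal{E}(\mathsf{G})=\{\mathrm{ev}(\sigma)\mid\sigma\in\mathrm{Tr}(\mathsf{G})\}$ and $\le_{\mathsf{G}},\#_{\mathsf{G}}$ are the restrictions of $\le,\#$ to $\mathcal{E}(\mathsf{G})$. *)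

theory Defs
  imports Main
begin

text \<open>Branchings \<open>{\<lambda>_i; X_i}_{i \<in> I}\<close> are finite lists of label/continuation pairs;
  non-emptiness and pairwise distinctness of labels are imposed by the
  well-formedness predicates below, together with regularity.\<close>

codatatype ('p, 'l) proc =
    Send 'p "('l \<times> ('p, 'l) proc) list"
  | Recv 'p "('l \<times> ('p, 'l) proc) list"
  | Nil0

codatatype ('p, 'l) gty =
    Comm 'p 'p "('l \<times> ('p, 'l) gty) list"
  | End

definition branching_ok :: "('l \<times> 'a) list \<Rightarrow> bool" where
  "branching_ok bs \<longleftrightarrow> bs \<noteq> [] \<and> distinct (map fst bs)"

inductive psub :: "('p, 'l) proc \<Rightarrow> ('p, 'l) proc \<Rightarrow> bool" where
  psub_refl: "psub P P"
| psub_send: "psub P (Send p bs) \<Longrightarrow> (l, Q) \<in> set bs \<Longrightarrow> psub P Q"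
| psub_recv: "psub P (Recv p bs) \<Longrightarrow> (l, Q) \<in> set bs \<Longrightarrow> psub P Q"

definition proc_ok :: "('p, 'l) proc \<Rightarrow> bool" where
  "proc_ok P \<longleftrightarrow> finite {Q. psub P Q} \<and>
     (\<forall>Q. psub P Q \<longrightarrow> (\<forall>p bs. (Q = Send p bs \<or> Q = Recv p bs) \<longrightarrow> branching_ok bs))"

inductive gsub :: "('p, 'l) gty \<Rightarrow> ('p, 'l) gty \<Rightarrow> bool" where
  gsub_refl: "gsub G G"
| gsub_step: "gsub G (Comm p q bs) \<Longrightarrow> (l, G') \<in> set bs \<Longrightarrow> gsub G G'"

definition gty_ok :: "('p, 'l) gty \<Rightarrow> bool" where
  "gty_ok G \<longleftrightarrow> finite {G'. gsub G G'} \<and>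
     (\<forall>p q bs. gsub G (Comm p q bs) \<longrightarrow> p \<noteq> q \<and> branching_ok bs)"

type_synonym ('p, 'l) comm = "'p \<times> 'p \<times> 'l"

definition partc :: "('p, 'l) comm \<Rightarrow> 'p set" where
  "partc a = {fst a, fst (snd a)}"

definition partt :: "('p, 'l) comm list \<Rightarrow> 'p set" where
  "partt \<sigma> = (\<Union>a\<in>set \<sigma>. partc a)"

inductive is_trace :: "('p, 'l) gty \<Rightarrow> ('p, 'l) comm list \<Rightarrow> bool" where
  tr_one: "G = Comm p q bs \<Longrightarrow> (l, Gi) \<in> set bs \<Longrightarrow> is_trace G [(p, q, l)]"
| tr_cons: "G = Comm p q bs \<Longrightarrow> (l, Gi) \<in> set bs \<Longrightarrow> is_trace Gi \<sigma> \<Longrightarrow> is_trace G ((p, q, l) # \<sigma>)"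

definition Tr :: "('p, 'l) gty \<Rightarrow> ('p, 'l) comm list set" where
  "Tr G = {\<sigma>. is_trace G \<sigma>}"

definition partG :: "('p, 'l) gty \<Rightarrow> 'p set" where
  "partG G = (\<Union>\<sigma>\<in>Tr G. partt \<sigma>)"

coinductive proj :: "('p, 'l) gty \<Rightarrow> 'p \<Rightarrow> ('p, 'l) proc \<Rightarrow> bool" where
  proj_none: "r \<notin> partG G \<Longrightarrow> proj G r Nil0"
| proj_recv: "r \<in> partG G \<Longrightarrow> G = Comm p q bs \<Longrightarrow> r = q \<Longrightarrow>
     list_all2 (\<lambda>b c. fst b = fst c \<and> proj (snd b) r (snd c)) bs cs \<Longrightarrow>
     proj G r (Recv p cs)"
| proj_send: "r \<in> partG G \<Longrightarrow> G = Comm p q bs \<Longrightarrow> r = p \<Longrightarrow> r \<noteq> q \<Longrightarrow>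
     list_all2 (\<lambda>b c. fst b = fst c \<and> proj (snd b) r (snd c)) bs cs \<Longrightarrow>
     proj G r (Send q cs)"
| proj_skip: "r \<in> partG G \<Longrightarrow> G = Comm p q bs \<Longrightarrow> r \<notin> {p, q} \<Longrightarrow>
     bs \<noteq> [] \<Longrightarrow> r \<in> partG (snd (hd bs)) \<Longrightarrow>
     (\<forall>b \<in> set bs. proj (snd b) r P) \<Longrightarrow> proj G r P"
  monos list.rel_mono

definition projectable :: "('p, 'l) gty \<Rightarrow> bool" where
  "projectable G \<longleftrightarrow> (\<forall>r. \<exists>P. proj G r P)"

definition depth :: "'p \<Rightarrow> ('p, 'l) comm list \<Rightarrow> nat" where
  "depth r \<sigma> = (if \<exists>i < length \<sigma>. r \<in> partc (\<sigma> ! i)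
      then Suc (LEAST i. i < length \<sigma> \<and> r \<in> partc (\<sigma> ! i)) else 0)"

text \<open>\<open>depth(r, G) = sup {depth r \<sigma> | \<sigma> \<in> Tr G}\<close> is finite iff this set is bounded.\<close>

definition bounded :: "('p, 'l) gty \<Rightarrow> bool" where
  "bounded G \<longleftrightarrow> (\<forall>G' r. gsub G G' \<longrightarrow> bdd_above (depth r ` Tr G'))"

definition well_formed :: "('p, 'l) gty \<Rightarrow> bool" where
  "well_formed G \<longleftrightarrow> gty_ok G \<and> projectable G \<and> bounded G"

coinductive subt :: "('p, 'l) proc \<Rightarrow> ('p, 'l) proc \<Rightarrow> bool" where
  subt_nil: "subt Nil0 Nil0"
| subt_recv: "set (map fst ds) \<subseteq> set (map fst cs) \<Longrightarrow>
     (\<forall>l P Q. (l, P) \<in> set cs \<longrightarrow> (l, Q) \<in> set ds \<longrightarrow> subt P Q) \<Longrightarrow>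
     subt (Recv p cs) (Recv p ds)"
| subt_send: "set (map fst ds) = set (map fst cs) \<Longrightarrow>
     (\<forall>l P Q. (l, P) \<in> set cs \<longrightarrow> (l, Q) \<in> set ds \<longrightarrow> subt P Q) \<Longrightarrow>
     subt (Send p cs) (Send p ds)"

definition network_ok :: "('p \<rightharpoonup> ('p, 'l) proc) \<Rightarrow> bool" where
  "network_ok N \<longleftrightarrow> finite (dom N) \<and> dom N \<noteq> {} \<and> (\<forall>p P. N p = Some P \<longrightarrow> proc_ok P)"

definition typed :: "('p \<rightharpoonup> ('p, 'l) proc) \<Rightarrow> ('p, 'l) gty \<Rightarrow> bool" where
  "typed N G \<longleftrightarrow> (\<forall>p P. N p = Some P \<longrightarrow> (\<exists>Q. proj G p Q \<and> subt P Q)) \<and> partG G \<subseteq> dom N"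

inductive swap1 :: "('p, 'l) comm list \<Rightarrow> ('p, 'l) comm list \<Rightarrow> bool" where
  "partc a \<inter> partc b = {} \<Longrightarrow> swap1 (\<sigma> @ a # b # \<sigma>') (\<sigma> @ b # a # \<sigma>')"

definition perm_eq :: "('p, 'l) comm list \<Rightarrow> ('p, 'l) comm list \<Rightarrow> bool" where
  "perm_eq = equivclp swap1"

definition cls :: "('p, 'l) comm list \<Rightarrow> ('p, 'l) comm list set" where
  "cls \<sigma> = {\<tau>. perm_eq \<sigma> \<tau>}"

definition pointed :: "('p, 'l) comm list \<Rightarrow> bool" where
  "pointed \<sigma> \<longleftrightarrow> \<sigma> \<noteq> [] \<and>
     (\<forall>i. Suc i < length \<sigma> \<longrightarrow> (\<exists>j. i < j \<and> j < length \<sigma> \<and> partc (\<sigma> ! i) \<inter> partc (\<sigma> ! j) \<noteq> {}))"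

definition g_event :: "('p, 'l) comm list set \<Rightarrow> bool" where
  "g_event \<gamma> \<longleftrightarrow> (\<exists>\<sigma>. pointed \<sigma> \<and> \<gamma> = cls \<sigma>)"

text \<open>Causal prefixing on classes; on a class all representatives have the same participants.\<close>

definition cpre :: "('p, 'l) comm \<Rightarrow> ('p, 'l) comm list set \<Rightarrow> ('p, 'l) comm list set" where
  "cpre a \<gamma> = (if \<exists>\<sigma>. \<gamma> = cls \<sigma> \<and> partc a \<inter> partt \<sigma> \<noteq> {}
      then cls (a # (SOME \<sigma>. \<gamma> = cls \<sigma>)) else \<gamma>)"

fun cpres :: "('p, 'l) comm list \<Rightarrow> ('p, 'l) comm list set \<Rightarrow> ('p, 'l) comm list set" where
  "cpres [] \<gamma> = \<gamma>"
| "cpres (a # \<sigma>) \<gamma> = cpre a (cpres \<sigma> \<gamma>)"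

definition ev :: "('p, 'l) comm list \<Rightarrow> ('p, 'l) comm list set" where
  "ev \<sigma> = cpres (butlast \<sigma>) (cls [last \<sigma>])"

definition causal :: "('p, 'l) comm list set \<Rightarrow> ('p, 'l) comm list set \<Rightarrow> bool" where
  "causal \<gamma> \<gamma>' \<longleftrightarrow> (\<exists>\<sigma> \<sigma>'. \<gamma> = cls \<sigma> \<and> \<gamma>' = cls (\<sigma> @ \<sigma>'))"

definition conflict :: "('p, 'l) comm list set \<Rightarrow> ('p, 'l) comm list set \<Rightarrow> bool" where
  "conflict \<gamma> \<gamma>' \<longleftrightarrow> (\<exists>\<sigma> p q l1 l2 \<sigma>1 \<sigma>2. l1 \<noteq> l2 \<and>
      \<gamma> = cls (\<sigma> @ (p, q, l1) # \<sigma>1) \<and> \<gamma>' = cls (\<sigma> @ (p, q, l2) # \<sigma>2))"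

definition events :: "('p, 'l) gty \<Rightarrow> ('p, 'l) comm list set set" where
  "events G = ev ` Tr G"

definition evstruct :: "('p, 'l) gty \<Rightarrow>
    ('p, 'l) comm list set set \<times> ('p, 'l) comm list set rel \<times> ('p, 'l) comm list set rel" where
  "evstruct G = (events G,
     {(x, y). x \<in> events G \<and> y \<in> events G \<and> causal x y},
     {(x, y). x \<in> events G \<and> y \<in> events G \<and> conflict x y})"

end

theory Submission
  imports Defs
begin


lemma swap1_partt: "swap1 x y \<Longrightarrow> partt x = partt y"
  by (induction rule: swap1.induct) (auto simp: partt_def)

lemma perm_eq_partt: "perm_eq x y \<Longrightarrow> partt x = partt y"
  unfolding perm_eq_def
  by (induction rule: equivclp_induct) (auto dest: swap1_partt)

lemma perm_eq_refl[simp]: "perm_eq x x"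
  by (simp add: perm_eq_def)

lemma perm_eq_sym: "perm_eq x y \<Longrightarrow> perm_eq y x"
  unfolding perm_eq_def by (rule equivclp_sym)

lemma perm_eq_trans[trans]: "perm_eq x y \<Longrightarrow> perm_eq y z \<Longrightarrow> perm_eq x z"
  unfolding perm_eq_def by (rule equivclp_trans)

lemma swap1_cons: "swap1 x y \<Longrightarrow> swap1 (a # x) (a # y)"
proof (induction rule: swap1.induct)
  case (1 a' b \<sigma> \<sigma>')
  then show ?case using swap1.intros[of a' b "a # \<sigma>" \<sigma>'] by simp
qed

lemma perm_eq_cons: "perm_eq x y \<Longrightarrow> perm_eq (a # x) (a # y)"
  unfolding perm_eq_def
proof (induction rule: equivclp_induct)
  case base then show ?case by simp
next
  case (step y z)
  then show ?case
    by (meson equivclp_into_equivclp swap1_cons)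
qed

lemma perm_eq_swap: "partc a \<inter> partc b = {} \<Longrightarrow> perm_eq (a # b # x) (b # a # x)"
  unfolding perm_eq_def using swap1.intros[of a b "[]" x] by auto

lemma cls_eq_iff: "cls x = cls y \<longleftrightarrow> perm_eq x y"
proof
  assume "cls x = cls y"
  then have "y \<in> cls x" by (auto simp: cls_def)
  then show "perm_eq x y" by (simp add: cls_def)
next
  assume "perm_eq x y"
  then show "cls x = cls y"
    by (auto simp: cls_def intro: perm_eq_trans perm_eq_sym)
qed

definition cstep :: "('p, 'l) comm \<Rightarrow> ('p, 'l) comm list \<Rightarrow> ('p, 'l) comm list" where
  "cstep a c = (if partc a \<inter> partt c \<noteq> {} then a # c else c)"

fun core :: "('p, 'l) comm list \<Rightarrow> ('p, 'l) comm list" where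
  "core [] = []"
| "core [x] = [x]"
| "core (a # b # w) = cstep a (core (b # w))"

lemma core_cons: "w \<noteq> [] \<Longrightarrow> core (a # w) = cstep a (core w)"
  by (cases w) auto

lemma cpre_cls: "cpre a (cls c) = cls (cstep a c)"
proof -
  have iff: "(\<exists>\<sigma>. cls c = cls \<sigma> \<and> partc a \<inter> partt \<sigma> \<noteq> {}) \<longleftrightarrow> partc a \<inter> partt c \<noteq> {}"
  proof
    assume "\<exists>\<sigma>. cls c = cls \<sigma> \<and> partc a \<inter> partt \<sigma> \<noteq> {}"
    then show "partc a \<inter> partt c \<noteq> {}" by (auto simp: cls_eq_iff dest: perm_eq_partt)
  next
    assume "partc a \<inter> partt c \<noteq> {}"
    then show "\<exists>\<sigma>. cls c = cls \<sigma> \<and> partc a \<inter> partt \<sigma> \<noteq> {}" by blast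
  qed
  have "cls c = cls (SOME \<sigma>. cls c = cls \<sigma>)" by (rule someI[of _ c]) simp
  then have "perm_eq c (SOME \<sigma>. cls c = cls \<sigma>)" by (simp add: cls_eq_iff)
  then have "cls (a # (SOME \<sigma>. cls c = cls \<sigma>)) = cls (a # c)"
    by (simp add: cls_eq_iff perm_eq_cons perm_eq_sym)
  then show ?thesis unfolding cpre_def cstep_def using iff by simp
qed

lemma cpres_core: "cpres xs (cls [x]) = cls (core (xs @ [x]))"
proof (induction xs)
  case Nil then show ?case by simp
next
  case (Cons a xs)
  then show ?case by (cases xs) (simp_all add: cpre_cls)
qed

lemma ev_core: "\<sigma> \<noteq> [] \<Longrightarrow> ev \<sigma> = cls (core \<sigma>)"
  unfolding ev_def by (simp add: cpres_core)

lemma cstep_cong: "perm_eq c c' \<Longrightarrow> perm_eq (cstep a c) (cstep a c')"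
  unfolding cstep_def using perm_eq_partt[of c c'] by (auto intro: perm_eq_cons)

lemma partt_cons[simp]: "partt (a # x) = partc a \<union> partt x"
  by (simp add: partt_def)
lemma partt_app[simp]: "partt (x @ y) = partt x \<union> partt y"
  by (simp add: partt_def)
lemma partt_nil[simp]: "partt [] = {}"
  by (simp add: partt_def)

lemma cstep_comm: "partc a \<inter> partc b = {} \<Longrightarrow> perm_eq (cstep a (cstep b c)) (cstep b (cstep a c))"
  unfolding cstep_def by (auto intro: perm_eq_swap)

lemma partt_core: "partt (core x) \<subseteq> partt x"
  by (induction x rule: core.induct) (auto simp: cstep_def)

lemma core_disj: "partt xs \<inter> partc c = {} \<Longrightarrow> core (xs @ [c]) = [c]"
proof (induction xs)
  case Nil then show ?case by simp
next
  case (Cons a xs)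
  then have "core (xs @ [c]) = [c]" by auto
  then show ?case using Cons.prems by (auto simp: core_cons cstep_def)
qed

lemma core_move: "partt r1 \<inter> partc c = {} \<Longrightarrow> r2 \<noteq> [] \<Longrightarrow>
   perm_eq (core (r1 @ c # r2)) (cstep c (core (r1 @ r2)))"
proof (induction r1)
  case Nil then show ?case by (cases r2) simp_all
next
  case (Cons a r1)
  have "core ((a # r1) @ c # r2) = cstep a (core (r1 @ c # r2))"
    by (cases r1) simp_all
  also have "perm_eq \<dots> (cstep a (cstep c (core (r1 @ r2))))"
    using Cons by (auto intro: cstep_cong)
  also have "perm_eq \<dots> (cstep c (cstep a (core (r1 @ r2))))"
    using Cons.prems by (intro cstep_comm) auto
  also have "cstep a (core (r1 @ r2)) = core ((a # r1) @ r2)"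
    using Cons.prems by (cases "r1 @ r2") auto
  finally show ?case by (auto intro: perm_eq_trans)
qed



lemma la2_ex: "list_all2 R xs ys \<Longrightarrow> x \<in> set xs \<Longrightarrow> \<exists>y\<in>set ys. R x y"
  by (induction rule: list_all2_induct) auto

lemma la2_fst: "list_all2 (\<lambda>b c. fst b = fst c \<and> Q b c) xs ys \<Longrightarrow> fst ` set xs = fst ` set ys"
  by (induction rule: list_all2_induct) auto

lemma Tr_End: "\<not> is_trace End \<sigma>"
  by (auto elim: is_trace.cases)

lemma partG_End[simp]: "partG End = {}"
  by (simp add: partG_def Tr_def Tr_End)

lemma partG_sub: "(l, G') \<in> set bs \<Longrightarrow> partG G' \<subseteq> partG (Comm p q bs)"
  unfolding partG_def Tr_def partt_def
  apply clarsimp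
  subgoal for x xa a aa b
    apply (rule exI[of _ "(p,q,l) # xa"])
    by (auto intro: is_trace.intros)
  done

lemma partG_top: "(l, G') \<in> set bs \<Longrightarrow> p \<in> partG (Comm p q bs) \<and> q \<in> partG (Comm p q bs)"
  unfolding partG_def Tr_def
  using is_trace.tr_one[of "Comm p q bs" p q bs l G'] by (force simp: partt_def partc_def)

lemma proj_notin: "proj G r P \<Longrightarrow> r \<notin> partG G \<Longrightarrow> P = Nil0"
  by (auto elim: proj.cases)

lemma proj_send_top: "proj (Comm s t bs) s Q \<Longrightarrow> s \<noteq> t \<Longrightarrow> s \<in> partG (Comm s t bs) \<Longrightarrow>
   \<exists>cs. Q = Send t cs \<and> list_all2 (\<lambda>b c. fst b = fst c \<and> proj (snd b) s (snd c)) bs cs"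
  apply (erule proj.cases)
  apply simp_all
  done

lemma proj_recv_top: "proj (Comm s t bs) t Q \<Longrightarrow> s \<noteq> t \<Longrightarrow> t \<in> partG (Comm s t bs) \<Longrightarrow>
   \<exists>cs. Q = Recv s cs \<and> list_all2 (\<lambda>b c. fst b = fst c \<and> proj (snd b) t (snd c)) bs cs"
  apply (erule proj.cases)
  apply simp_all
  done

lemma proj_other:
  assumes pr: "proj (Comm s t bs) r Q" and rn: "r \<notin> {s, t}" and lg: "(l, G') \<in> set bs"
  shows "proj G' r Q"
  using pr
proof (cases rule: proj.cases)
  case proj_none
  then have "r \<notin> partG G'" using partG_sub[OF lg, of s t] by blast
  then show ?thesis using proj_none by (simp add: proj.proj_none)
next
  case (proj_recv p q bs cs)
  then show ?thesis using rn by simp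
next
  case (proj_send p q bs cs)
  then show ?thesis using rn by simp
next
  case (proj_skip p q bs')
  then have "\<forall>b\<in>set bs. proj (snd b) r Q" by simp
  from bspec[OF this lg] show ?thesis by simp
qed

lemma subt_Send: assumes "subt P (Send t cs)" shows "\<exists>ds. P = Send t ds \<and> fst ` set ds = fst ` set cs \<and>
   (\<forall>l P Q. (l, P) \<in> set ds \<longrightarrow> (l, Q) \<in> set cs \<longrightarrow> subt P Q)"
  using assms
proof (cases rule: subt.cases)
  case (subt_send b)
  show ?thesis apply (rule exI[of _ b]) using subt_send by simp
qed

lemma subt_Recv: assumes "subt P (Recv t cs)" shows "\<exists>ds. P = Recv t ds \<and> fst ` set cs \<subseteq> fst ` set ds \<and>
   (\<forall>l P Q. (l, P) \<in> set ds \<longrightarrow> (l, Q) \<in> set cs \<longrightarrow> subt P Q)"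
  using assms
proof (cases rule: subt.cases)
  case (subt_recv b)
  show ?thesis apply (rule exI[of _ b]) using subt_recv by simp
qed

lemma subt_Nil0: "subt P Nil0 \<Longrightarrow> P = Nil0"
  by (erule subt.cases) simp_all

lemma top:
  assumes ty: "typed N (Comm s t bs)" and st: "s \<noteq> t" and ne: "bs \<noteq> []"
  shows "\<exists>ds cs. N s = Some (Send t ds) \<and> N t = Some (Recv s cs) \<and> fst ` set ds = fst ` set bs \<and>
     fst ` set bs \<subseteq> fst ` set cs \<and>
     (\<forall>\<mu> G\<mu> P' P''. (\<mu>, G\<mu>) \<in> set bs \<longrightarrow> (\<mu>, P') \<in> set ds \<longrightarrow> (\<mu>, P'') \<in> set cs \<longrightarrow>
        typed (N(s \<mapsto> P', t \<mapsto> P'')) G\<mu>)"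
proof -
  let ?G = "Comm s t bs"
  obtain l0 G0 where l0: "(l0, G0) \<in> set bs" using ne by (cases bs) auto
  have sin: "s \<in> partG ?G" and tin: "t \<in> partG ?G" using partG_top[OF l0] by auto
  have dom: "partG ?G \<subseteq> dom N" using ty by (simp add: typed_def)
  obtain Ps where Ps: "N s = Some Ps" using sin dom by auto
  obtain Pt where Pt: "N t = Some Pt" using tin dom by auto
  obtain Qs where Qs: "proj ?G s Qs" "subt Ps Qs" using ty Ps unfolding typed_def by blast
  obtain Qt where Qt: "proj ?G t Qt" "subt Pt Qt" using ty Pt unfolding typed_def by blast
  obtain cs1 where cs1: "Qs = Send t cs1" "list_all2 (\<lambda>b c. fst b = fst c \<and> proj (snd b) s (snd c)) bs cs1"
    using proj_send_top[OF Qs(1) st sin] by blast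
  obtain cs2 where cs2: "Qt = Recv s cs2" "list_all2 (\<lambda>b c. fst b = fst c \<and> proj (snd b) t (snd c)) bs cs2"
    using proj_recv_top[OF Qt(1) st tin] by blast
  obtain ds where ds: "Ps = Send t ds" "fst ` set ds = fst ` set cs1"
     "\<forall>l P Q. (l, P) \<in> set ds \<longrightarrow> (l, Q) \<in> set cs1 \<longrightarrow> subt P Q"
    using subt_Send[OF Qs(2)[unfolded cs1(1)]] by blast
  obtain cs where cs: "Pt = Recv s cs" "fst ` set cs2 \<subseteq> fst ` set cs"
     "\<forall>l P Q. (l, P) \<in> set cs \<longrightarrow> (l, Q) \<in> set cs2 \<longrightarrow> subt P Q"
    using subt_Recv[OF Qt(2)[unfolded cs2(1)]] by blast
  have f1: "fst ` set bs = fst ` set cs1" using la2_fst[OF cs1(2)] .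
  have f2: "fst ` set bs = fst ` set cs2" using la2_fst[OF cs2(2)] .
  have typd: "typed (N(s \<mapsto> P', t \<mapsto> P'')) G\<mu>"
    if m: "(\<mu>, G\<mu>) \<in> set bs" "(\<mu>, P') \<in> set ds" "(\<mu>, P'') \<in> set cs" for \<mu> G\<mu> P' P''
  proof -
    obtain c1 where c1: "c1 \<in> set cs1" "fst c1 = \<mu>" "proj G\<mu> s (snd c1)"
      using la2_ex[OF cs1(2) m(1)] by auto
    obtain c2 where c2: "c2 \<in> set cs2" "fst c2 = \<mu>" "proj G\<mu> t (snd c2)"
      using la2_ex[OF cs2(2) m(1)] by auto
    have "(\<mu>, snd c1) = c1" using c1(2) by (simp add: prod_eq_iff)
    then have "(\<mu>, snd c1) \<in> set cs1" using c1(1) by simp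
    then have s1: "subt P' (snd c1)" using ds(3) m(2) by blast
    have "(\<mu>, snd c2) = c2" using c2(2) by (simp add: prod_eq_iff)
    then have "(\<mu>, snd c2) \<in> set cs2" using c2(1) by simp
    then have s2: "subt P'' (snd c2)" using cs(3) m(3) by blast
    show ?thesis unfolding typed_def
    proof (intro conjI allI impI)
      fix r P assume rP: "(N(s \<mapsto> P', t \<mapsto> P'')) r = Some P"
      show "\<exists>Q. proj G\<mu> r Q \<and> subt P Q"
      proof (cases "r = t")
        case True then have "P = P''" using rP by simp
        then show ?thesis using True s2 c2(3) by blast
      next
        case rt: False
        show ?thesis
        proof (cases "r = s")
          case True then have "P = P'" using rP rt by simp
          then show ?thesis using True s1 c1(3) by blast
        next
          case False
          then have "N r = Some P" using rP rt by auto
          then obtain Q where "proj ?G r Q" "subt P Q" using ty unfolding typed_def by blast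
          then show ?thesis using proj_other[of s t bs r Q \<mu> G\<mu>] m(1) False rt by auto
        qed
      qed
    next
      show "partG G\<mu> \<subseteq> dom (N(s \<mapsto> P', t \<mapsto> P''))"
        using partG_sub[OF m(1), of s t] dom by auto
    qed
  qed
  have e1: "N s = Some (Send t ds)" using Ps ds(1) by simp
  have e2: "N t = Some (Recv s cs)" using Pt cs(1) by simp
  have e3: "fst ` set ds = fst ` set bs" using ds(2) f1 by simp
  have e4: "fst ` set bs \<subseteq> fst ` set cs" using cs(2) f2 by simp
  show ?thesis
    apply (rule exI[of _ ds], rule exI[of _ cs])
    apply (intro conjI e1 e2 e3 e4 allI impI)
    by (rule typd)
qed



datatype ('p, 'l) lact = Out 'p 'l | In 'p 'l

primrec lpath :: "('p, 'l) lact list \<Rightarrow> ('p, 'l) proc \<Rightarrow> bool" where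
  "lpath [] P = True"
| "lpath (x # w) P = (case x of
     Out q l \<Rightarrow> (\<exists>ds. P = Send q ds \<and> (\<exists>P'. (l, P') \<in> set ds \<and> lpath w P'))
   | In p l \<Rightarrow> (\<exists>cs. P = Recv p cs \<and> (\<exists>P'. (l, P') \<in> set cs \<and> lpath w P')))"

definition locc :: "'p \<Rightarrow> ('p, 'l) comm \<Rightarrow> ('p, 'l) lact list" where
  "locc r c = (if r = fst c then [Out (fst (snd c)) (snd (snd c))]
     else if r = fst (snd c) then [In (fst c) (snd (snd c))] else [])"

definition loc :: "'p \<Rightarrow> ('p, 'l) comm list \<Rightarrow> ('p, 'l) lact list" where
  "loc r \<rho> = concat (map (locc r) \<rho>)"

lemma loc_nil[simp]: "loc r [] = []" by (simp add: loc_def)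
lemma loc_cons[simp]: "loc r (c # \<rho>) = locc r c @ loc r \<rho>" by (simp add: loc_def)
lemma loc_app[simp]: "loc r (x @ y) = loc r x @ loc r y" by (simp add: loc_def)

lemma locc_notin: "r \<notin> partc c \<Longrightarrow> locc r c = []"
  by (simp add: locc_def partc_def)

lemma loc_notin: "r \<notin> partt \<rho> \<Longrightarrow> loc r \<rho> = []"
  by (induction \<rho>) (auto simp: locc_notin)

definition prc :: "('p \<rightharpoonup> ('p, 'l) proc) \<Rightarrow> 'p \<Rightarrow> ('p, 'l) proc" where
  "prc N r = (case N r of None \<Rightarrow> Nil0 | Some P \<Rightarrow> P)"

definition exec :: "('p \<rightharpoonup> ('p, 'l) proc) \<Rightarrow> ('p, 'l) comm list \<Rightarrow> bool" where
  "exec N \<rho> \<longleftrightarrow> (\<forall>r. lpath (loc r \<rho>) (prc N r))"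

lemma exec_nil[simp]: "exec N []" by (simp add: exec_def)

lemma prc_Send: "prc N r = Send q ds \<Longrightarrow> N r = Some (Send q ds)"
  by (cases "N r") (auto simp: prc_def)
lemma prc_Recv: "prc N r = Recv q ds \<Longrightarrow> N r = Some (Recv q ds)"
  by (cases "N r") (auto simp: prc_def)

lemma exec_cons:
  assumes st: "s \<noteq> t" and ex: "exec N ((s, t, l) # \<rho>)"
  shows "\<exists>ds cs P' P''. N s = Some (Send t ds) \<and> (l, P') \<in> set ds \<and> N t = Some (Recv s cs) \<and>
     (l, P'') \<in> set cs \<and> exec (N(s \<mapsto> P', t \<mapsto> P'')) \<rho>"
proof -
  have "lpath (loc s ((s, t, l) # \<rho>)) (prc N s)" using ex by (simp add: exec_def)
  then obtain ds P' where d: "prc N s = Send t ds" "(l, P') \<in> set ds" "lpath (loc s \<rho>) P'"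
    by (auto simp: locc_def)
  have "lpath (loc t ((s, t, l) # \<rho>)) (prc N t)" using ex by (simp add: exec_def)
  then obtain cs P'' where c: "prc N t = Recv s cs" "(l, P'') \<in> set cs" "lpath (loc t \<rho>) P''"
    using st by (auto simp: locc_def)
  have "exec (N(s \<mapsto> P', t \<mapsto> P'')) \<rho>"
    unfolding exec_def
  proof
    fix r
    show "lpath (loc r \<rho>) (prc (N(s \<mapsto> P', t \<mapsto> P'')) r)"
    proof (cases "r = t")
      case True then show ?thesis using c by (simp add: prc_def)
    next
      case False
      show ?thesis
      proof (cases "r = s")
        case True then show ?thesis using d False by (simp add: prc_def)
      next
        case False
        have "lpath (loc r ((s, t, l) # \<rho>)) (prc N r)" using ex by (simp add: exec_def)
        then show ?thesis using False \<open>r \<noteq> t\<close> by (simp add: prc_def locc_def)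
      qed
    qed
  qed
  moreover have "N s = Some (Send t ds)" using prc_Send[OF d(1)] .
  moreover have "N t = Some (Recv s cs)" using prc_Recv[OF c(1)] .
  ultimately show ?thesis using d(2) c(2) by blast
qed

lemma exec_consI:
  assumes st: "s \<noteq> t" and "N s = Some (Send t ds)" "(l, P') \<in> set ds" "N t = Some (Recv s cs)"
    "(l, P'') \<in> set cs" and ex: "exec (N(s \<mapsto> P', t \<mapsto> P'')) \<rho>"
  shows "exec N ((s, t, l) # \<rho>)"
  unfolding exec_def
proof
  fix r
  have e: "lpath (loc r \<rho>) (prc (N(s \<mapsto> P', t \<mapsto> P'')) r)" using ex by (simp add: exec_def)
  show "lpath (loc r ((s, t, l) # \<rho>)) (prc N r)"
  proof (cases "r = t")
    case True then show ?thesis using e assms st by (auto simp: prc_def locc_def)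
  next
    case False
    show ?thesis
    proof (cases "r = s")
      case True then show ?thesis using e assms False by (auto simp: prc_def locc_def)
    next
      case False
      then show ?thesis using e \<open>r \<noteq> t\<close> by (simp add: prc_def locc_def)
    qed
  qed
qed

lemma exec_frame:
  assumes "exec N \<rho>" "partt \<rho> \<inter> {s, t} = {}"
  shows "exec (N(s \<mapsto> P', t \<mapsto> P'')) \<rho>"
  unfolding exec_def
proof
  fix r
  show "lpath (loc r \<rho>) (prc (N(s \<mapsto> P', t \<mapsto> P'')) r)"
  proof (cases "r \<in> {s, t}")
    case True
    then have "loc r \<rho> = []" using assms(2) by (intro loc_notin) auto
    then show ?thesis by simp
  next
    case False
    then show ?thesis using assms(1) by (simp add: exec_def prc_def)
  qed
qed

definition gok :: "('p, 'l) gty \<Rightarrow> bool" where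
  "gok G \<longleftrightarrow> (\<forall>p q bs. gsub G (Comm p q bs) \<longrightarrow> p \<noteq> q \<and> bs \<noteq> [])"

lemma gsub_trans: "gsub G' X \<Longrightarrow> gsub G (Comm p q bs) \<Longrightarrow> (l, G') \<in> set bs \<Longrightarrow> gsub G X"
proof (induction rule: gsub.induct)
  case (gsub_refl G')
  then show ?case by (rule gsub_step)
next
  case (gsub_step G' p' q' bs' l' G'')
  have "gsub G (Comm p' q' bs')" using gsub_step.IH gsub_step.prems .
  then show ?case using gsub_step.hyps(2) by (rule gsub.gsub_step)
qed

lemma gsub_child: assumes a: "(l, G') \<in> set bs" and b: "gsub G' X" shows "gsub (Comm p q bs) X"
  using gsub_trans[OF b gsub.gsub_refl a] .

lemma gok_sub: assumes "gok (Comm p q bs)" "(l, G') \<in> set bs" shows "gok G'"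
  unfolding gok_def
proof (intro allI impI)
  fix a b c assume "gsub G' (Comm a b c)"
  then have "gsub (Comm p q bs) (Comm a b c)" using gsub_child[OF assms(2)] by blast
  with assms(1) show "a \<noteq> b \<and> c \<noteq> []" unfolding gok_def by simp
qed

lemma bounded_sub: assumes "bounded (Comm p q bs)" "(l, G') \<in> set bs" shows "bounded G'"
  unfolding bounded_def
proof (intro allI impI)
  fix X r assume "gsub G' X"
  then have "gsub (Comm p q bs) X" using gsub_child[OF assms(2)] by blast
  with assms(1) show "bdd_above (depth r ` Tr X)" unfolding bounded_def by simp
qed

lemma gok_top: "gok (Comm p q bs) \<Longrightarrow> p \<noteq> q \<and> bs \<noteq> []"
  unfolding gok_def using gsub_refl by blast

lemma wf_gok: "well_formed G \<Longrightarrow> gok G"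
  unfolding well_formed_def gty_ok_def gok_def branching_ok_def by blast

lemma trace_ne: "is_trace G \<sigma> \<Longrightarrow> \<sigma> \<noteq> []"
  by (auto elim: is_trace.cases)

lemma fst_mem: "l \<in> fst ` set xs \<Longrightarrow> \<exists>P. (l, P) \<in> set xs"
proof -
  assume "l \<in> fst ` set xs"
  then obtain x where "x \<in> set xs" "l = fst x" by blast
  then have "(l, snd x) \<in> set xs" by simp
  then show ?thesis by blast
qed

lemma fst_memI: "(l, P) \<in> set xs \<Longrightarrow> l \<in> fst ` set xs"
  using image_eqI[of l fst "(l, P)" "set xs"] by simp

lemma top_obtain:
  assumes "typed N (Comm s t bs)" "gok (Comm s t bs)"
  obtains ds cs where "s \<noteq> t" "bs \<noteq> []" "N s = Some (Send t ds)" "N t = Some (Recv s cs)"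
    "fst ` set ds = fst ` set bs" "fst ` set bs \<subseteq> fst ` set cs"
    "\<And>\<mu> G\<mu> P' P''. (\<mu>, G\<mu>) \<in> set bs \<Longrightarrow> (\<mu>, P') \<in> set ds \<Longrightarrow> (\<mu>, P'') \<in> set cs \<Longrightarrow>
        typed (N(s \<mapsto> P', t \<mapsto> P'')) G\<mu>"
proof -
  have pq: "s \<noteq> t" "bs \<noteq> []" using gok_top[OF assms(2)] by auto
  from top[OF assms(1) pq] obtain ds cs where
    t: "N s = Some (Send t ds) \<and> N t = Some (Recv s cs) \<and> fst ` set ds = fst ` set bs \<and>
     fst ` set bs \<subseteq> fst ` set cs \<and>
     (\<forall>\<mu> G\<mu> P' P''. (\<mu>, G\<mu>) \<in> set bs \<longrightarrow> (\<mu>, P') \<in> set ds \<longrightarrow> (\<mu>, P'') \<in> set cs \<longrightarrow>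
        typed (N(s \<mapsto> P', t \<mapsto> P'')) G\<mu>)"
    by (elim exE) (rule that)
  show ?thesis
    apply (rule that[of ds cs])
    using pq t by simp_all
qed

lemma trace_exec: "is_trace G \<sigma> \<Longrightarrow> typed N G \<Longrightarrow> gok G \<Longrightarrow> exec N \<sigma>"
proof (induction arbitrary: N rule: is_trace.induct)
  case (tr_one G p q bs l Gi)
  have ty: "typed N (Comm p q bs)" and g: "gok (Comm p q bs)" using tr_one by simp_all
  obtain ds cs where t: "p \<noteq> q" "N p = Some (Send q ds)" "N q = Some (Recv p cs)"
    "fst ` set ds = fst ` set bs" "fst ` set bs \<subseteq> fst ` set cs"
    using top_obtain[OF ty g] by metis
  have lb: "l \<in> fst ` set bs" using tr_one(2) by (rule fst_memI)
  obtain P' where P': "(l, P') \<in> set ds" using fst_mem[of l ds] lb t(4) by blast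
  obtain P'' where P'': "(l, P'') \<in> set cs" using fst_mem[of l cs] lb t(5) by blast
  show ?case using exec_consI[OF t(1) t(2) P' t(3) P''] by simp
next
  case (tr_cons G p q bs l Gi \<sigma>)
  have ty: "typed N (Comm p q bs)" and g: "gok (Comm p q bs)" using tr_cons by simp_all
  obtain ds cs where t: "p \<noteq> q" "N p = Some (Send q ds)" "N q = Some (Recv p cs)"
    "fst ` set ds = fst ` set bs" "fst ` set bs \<subseteq> fst ` set cs"
    "\<And>\<mu> G\<mu> P' P''. (\<mu>, G\<mu>) \<in> set bs \<Longrightarrow> (\<mu>, P') \<in> set ds \<Longrightarrow> (\<mu>, P'') \<in> set cs \<Longrightarrow>
        typed (N(p \<mapsto> P', q \<mapsto> P'')) G\<mu>"
    using top_obtain[OF ty g] by metis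
  have lb: "l \<in> fst ` set bs" using tr_cons(2) by (rule fst_memI)
  obtain P' where P': "(l, P') \<in> set ds" using fst_mem[of l ds] lb t(4) by blast
  obtain P'' where P'': "(l, P'') \<in> set cs" using fst_mem[of l cs] lb t(5) by blast
  have "typed (N(p \<mapsto> P', q \<mapsto> P'')) Gi" using t(6)[OF tr_cons(2) P' P''] .
  moreover have "gok Gi" using gok_sub[OF g tr_cons(2)] .
  ultimately have "exec (N(p \<mapsto> P', q \<mapsto> P'')) \<sigma>" using tr_cons.IH by blast
  then show ?case using exec_consI[OF t(1) t(2) P' t(3) P''] by simp
qed

lemma depth_cons:
  assumes "r \<notin> partc a"
  shows "depth r (a # \<sigma>) = (if depth r \<sigma> = 0 then 0 else Suc (depth r \<sigma>))"
proof -
  let ?P = "\<lambda>i. i < length (a # \<sigma>) \<and> r \<in> partc ((a # \<sigma>) ! i)"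
  let ?Q = "\<lambda>i. i < length \<sigma> \<and> r \<in> partc (\<sigma> ! i)"
  have PQ: "?P (Suc i) = ?Q i" for i by simp
  have P0: "\<not> ?P 0" using assms by simp
  have ex: "(\<exists>i. ?P i) = (\<exists>i. ?Q i)"
  proof
    assume "\<exists>i. ?P i"
    then obtain i where "?P i" by blast
    then show "\<exists>i. ?Q i" using P0 by (cases i) auto
  next
    assume "\<exists>i. ?Q i"
    then show "\<exists>i. ?P i" using PQ by blast
  qed
  show ?thesis
  proof (cases "\<exists>i. ?Q i")
    case True
    then obtain i where "?Q i" by blast
    then have "?P (Suc i)" by simp
    then have "(LEAST i. ?P i) = Suc (LEAST i. ?P (Suc i))" using P0 by (rule Least_Suc)
    then show ?thesis using True ex unfolding depth_def
      by (simp del: length_Cons nth_Cons_Suc)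
  next
    case False
    then show ?thesis using ex unfolding depth_def by (auto simp del: nth_Cons_Suc)
  qed
qed

lemma depth_pos: "r \<in> partt \<sigma> \<Longrightarrow> depth r \<sigma> \<ge> 1"
  unfolding partt_def depth_def by (fastforce simp: in_set_conv_nth)



lemma p_in:
  assumes ex: "exec N \<rho>" and ne: "\<rho> \<noteq> []" and ty: "typed N G"
  shows "fst (hd \<rho>) \<in> partG G"
proof -
  obtain c \<rho>0 where r: "\<rho> = c # \<rho>0" using ne by (cases \<rho>) auto
  let ?p = "fst c"
  have "lpath (loc ?p \<rho>) (prc N ?p)" using ex by (simp add: exec_def)
  then have "lpath (Out (fst (snd c)) (snd (snd c)) # loc ?p \<rho>0) (prc N ?p)"
    using r by (simp add: locc_def)
  then obtain ds where "prc N ?p = Send (fst (snd c)) ds" by auto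
  then have Np: "N ?p = Some (Send (fst (snd c)) ds)" by (rule prc_Send)
  then obtain Q where Q: "proj G ?p Q" "subt (Send (fst (snd c)) ds) Q"
    using ty unfolding typed_def by blast
  show ?thesis
  proof (rule ccontr)
    assume "fst (hd \<rho>) \<notin> partG G"
    then have "?p \<notin> partG G" using r by simp
    then have "Q = Nil0" using proj_notin[OF Q(1)] by simp
    then show False using subt_Nil0 Q(2) by fastforce
  qed
qed

lemma split_first: "partt \<rho> \<inter> A \<noteq> {} \<Longrightarrow>
   \<exists>\<rho>1 c \<rho>2. \<rho> = \<rho>1 @ c # \<rho>2 \<and> partt \<rho>1 \<inter> A = {} \<and> partc c \<inter> A \<noteq> {}"
proof (induction \<rho>)
  case Nil then show ?case by simp
next
  case (Cons a \<rho>)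
  show ?case
  proof (cases "partc a \<inter> A = {}")
    case True
    then have "partt \<rho> \<inter> A \<noteq> {}" using Cons.prems by auto
    then obtain \<rho>1 c \<rho>2 where "\<rho> = \<rho>1 @ c # \<rho>2" "partt \<rho>1 \<inter> A = {}" "partc c \<inter> A \<noteq> {}"
      using Cons.IH by blast
    then show ?thesis using True by (intro exI[of _ "a # \<rho>1"] exI[of _ c] exI[of _ \<rho>2]) auto
  next
    case False
    then show ?thesis by (intro exI[of _ "[]"] exI[of _ a] exI[of _ \<rho>]) auto
  qed
qed

lemma first_comm:
  assumes "s \<noteq> t" "lpath (locc s c @ w1) (Send t ds)" "lpath (locc t c @ w2) (Recv s cs)"
    "partc c \<inter> {s, t} \<noteq> {}"
  shows "c = (s, t, snd (snd c))"
proof -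
  obtain x y l where c: "c = (x, y, l)" by (cases c) auto
  show ?thesis using assms unfolding c locc_def partc_def
    by (auto split: if_splits)
qed

lemma loc_move: "partt \<rho>1 \<inter> partc c = {} \<Longrightarrow> loc r (\<rho>1 @ c # \<rho>2) = loc r (c # \<rho>1 @ \<rho>2)"
proof (cases "r \<in> partc c")
  case True
  assume "partt \<rho>1 \<inter> partc c = {}"
  then have "loc r \<rho>1 = []" using True by (intro loc_notin) blast
  then show ?thesis by simp
next
  case False
  then have "locc r c = []" by (rule locc_notin)
  then show ?thesis by simp
qed

lemma exec_move:
  assumes a: "exec N (\<rho>1 @ c # \<rho>2)" and d: "partt \<rho>1 \<inter> partc c = {}"
  shows "exec N (c # \<rho>1 @ \<rho>2)"
  unfolding exec_def
proof
  fix r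
  have e: "lpath (loc r (\<rho>1 @ c # \<rho>2)) (prc N r)" using a unfolding exec_def by blast
  have q: "loc r (\<rho>1 @ c # \<rho>2) = loc r (c # \<rho>1 @ \<rho>2)" by (rule loc_move[OF d])
  show "lpath (loc r (c # \<rho>1 @ \<rho>2)) (prc N r)" using e unfolding q .
qed

lemma partc_triple[simp]: "partc (s, t, l) = {s, t}"
  by (simp add: partc_def)

lemma core_partt_eq: "perm_eq (core \<tau>) (core \<rho>) \<Longrightarrow> partt (core \<tau>) \<subseteq> partt \<rho>"
proof -
  assume "perm_eq (core \<tau>) (core \<rho>)"
  then have "partt (core \<tau>) = partt (core \<rho>)" by (rule perm_eq_partt)
  then show ?thesis using partt_core[of \<rho>] by simp
qed

lemma fid_inner:
  fixes \<rho> :: "('p, 'l) comm list"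
  assumes IH: "\<And>(\<rho>' :: ('p, 'l) comm list) N' G'. length \<rho>' < length \<rho> \<Longrightarrow> \<rho>' \<noteq> [] \<Longrightarrow> exec N' \<rho>' \<Longrightarrow> typed N' G' \<Longrightarrow>
      gok G' \<Longrightarrow> bounded G' \<Longrightarrow> \<exists>\<tau>\<in>Tr G'. perm_eq (core \<tau>) (core \<rho>')"
    and ne: "\<rho> \<noteq> []"
  shows "exec N \<rho> \<Longrightarrow> typed N G \<Longrightarrow> gok G \<Longrightarrow> bounded G \<Longrightarrow>
    \<forall>\<sigma>\<in>Tr G. depth (fst (hd \<rho>)) \<sigma> \<le> n \<Longrightarrow> \<exists>\<tau>\<in>Tr G. perm_eq (core \<tau>) (core \<rho>)"
proof (induction n arbitrary: N G)
  case 0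
  have "fst (hd \<rho>) \<in> partG G" using p_in[OF 0(1) ne 0(2)] .
  then obtain \<sigma> where "\<sigma> \<in> Tr G" "fst (hd \<rho>) \<in> partt \<sigma>" unfolding partG_def by blast
  then show ?case using 0(5) depth_pos[of "fst (hd \<rho>)" \<sigma>] by fastforce
next
  case (Suc n)
  let ?p = "fst (hd \<rho>)"
  have pin: "?p \<in> partG G" using p_in[OF Suc(2) ne Suc(3)] .
  have pr: "?p \<in> partt \<rho>" using ne by (cases \<rho>) (auto simp: partc_def)
  obtain s t bs where G: "G = Comm s t bs"
    using pin by (cases G) auto
  have ty: "typed N (Comm s t bs)" and g: "gok (Comm s t bs)" and bd: "bounded (Comm s t bs)"
    using Suc G by simp_all
  obtain ds cs where t: "s \<noteq> t" "bs \<noteq> []" "N s = Some (Send t ds)" "N t = Some (Recv s cs)"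
    "fst ` set ds = fst ` set bs" "fst ` set bs \<subseteq> fst ` set cs"
    "\<And>\<mu> G\<mu> P' P''. (\<mu>, G\<mu>) \<in> set bs \<Longrightarrow> (\<mu>, P') \<in> set ds \<Longrightarrow> (\<mu>, P'') \<in> set cs \<Longrightarrow>
        typed (N(s \<mapsto> P', t \<mapsto> P'')) G\<mu>"
    using top_obtain[OF ty g] by metis
  show ?case
  proof (cases "partt \<rho> \<inter> {s, t} = {}")
    case True
    obtain \<mu> G\<mu> where m: "(\<mu>, G\<mu>) \<in> set bs" using t(2) by (cases bs) auto
    have lb: "\<mu> \<in> fst ` set bs" using m by (rule fst_memI)
    obtain P' where P': "(\<mu>, P') \<in> set ds" using fst_mem[of \<mu> ds] lb t(5) by blast
    obtain P'' where P'': "(\<mu>, P'') \<in> set cs" using fst_mem[of \<mu> cs] lb t(6) by blast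
    have ex': "exec (N(s \<mapsto> P', t \<mapsto> P'')) \<rho>" using exec_frame[OF Suc(2) True] .
    have ty': "typed (N(s \<mapsto> P', t \<mapsto> P'')) G\<mu>" using t(7)[OF m P' P''] .
    have g': "gok G\<mu>" using gok_sub[OF g m] .
    have b': "bounded G\<mu>" using bounded_sub[OF bd m] .
    have pst: "?p \<notin> {s, t}" using pr True by blast
    have dp: "\<forall>\<sigma>\<in>Tr G\<mu>. depth ?p \<sigma> \<le> n"
    proof
      fix \<sigma> assume "\<sigma> \<in> Tr G\<mu>"
      then have "is_trace (Comm s t bs) ((s, t, \<mu>) # \<sigma>)" unfolding Tr_def
        by (intro tr_cons[OF refl m]) simp
      then have "(s, t, \<mu>) # \<sigma> \<in> Tr G" unfolding Tr_def G by simp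
      then have "depth ?p ((s, t, \<mu>) # \<sigma>) \<le> Suc n" using Suc(6) by blast
      then show "depth ?p \<sigma> \<le> n" using depth_cons[of ?p "(s, t, \<mu>)" \<sigma>] pst
        by (auto split: if_splits)
    qed
    obtain \<tau>' where \<tau>': "\<tau>' \<in> Tr G\<mu>" "perm_eq (core \<tau>') (core \<rho>)"
      using Suc.IH[OF ex' ty' g' b' dp] by blast
    have tne: "\<tau>' \<noteq> []" using \<tau>'(1) trace_ne unfolding Tr_def by blast
    have "is_trace (Comm s t bs) ((s, t, \<mu>) # \<tau>')" using \<tau>'(1) unfolding Tr_def
      by (intro tr_cons[OF refl m]) simp
    then have tr: "(s, t, \<mu>) # \<tau>' \<in> Tr G" unfolding Tr_def G by simp
    have "partt (core \<tau>') \<subseteq> partt \<rho>" using core_partt_eq[OF \<tau>'(2)] .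
    then have "partc (s, t, \<mu>) \<inter> partt (core \<tau>') = {}" using True by auto
    then have "core ((s, t, \<mu>) # \<tau>') = core \<tau>'" using tne by (simp add: core_cons cstep_def)
    then have "perm_eq (core ((s, t, \<mu>) # \<tau>')) (core \<rho>)" using \<tau>'(2) by simp
    then show ?thesis using tr by (rule bexI)
  next
    case False
    obtain \<rho>1 c \<rho>2 where sp: "\<rho> = \<rho>1 @ c # \<rho>2" "partt \<rho>1 \<inter> {s, t} = {}" "partc c \<inter> {s, t} \<noteq> {}"
      using split_first[OF False] by blast
    have ls: "loc s \<rho>1 = []" "loc t \<rho>1 = []" using sp(2) by (auto intro: loc_notin)
    have "lpath (loc s \<rho>) (prc N s)" "lpath (loc t \<rho>) (prc N t)"
      using Suc(2) by (simp_all add: exec_def)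
    then have "lpath (locc s c @ loc s \<rho>2) (Send t ds)" "lpath (locc t c @ loc t \<rho>2) (Recv s cs)"
      using sp(1) ls t(3,4) by (simp_all add: prc_def)
    then have c: "c = (s, t, snd (snd c))" by (rule first_comm[OF t(1) _ _ sp(3)])
    define l where "l = snd (snd c)"
    have c': "c = (s, t, l)" unfolding l_def by (rule c)
    have disj: "partt \<rho>1 \<inter> partc c = {}" using sp(2) c' by simp
    have "exec N (c # \<rho>1 @ \<rho>2)" using exec_move[of N \<rho>1 c \<rho>2] Suc(2) sp(1) disj by simp
    then have "exec N ((s, t, l) # \<rho>1 @ \<rho>2)" using c' by simp
    from exec_cons[OF t(1) this] obtain ds' cs' P' P'' where e: "N s = Some (Send t ds')" "(l, P') \<in> set ds'"
      "N t = Some (Recv s cs')" "(l, P'') \<in> set cs'" "exec (N(s \<mapsto> P', t \<mapsto> P'')) (\<rho>1 @ \<rho>2)"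
      by (elim exE conjE) (rule that)
    have P': "(l, P') \<in> set ds" using e(1,2) t(3) by simp
    have P'': "(l, P'') \<in> set cs" using e(3,4) t(4) by simp
    have "l \<in> fst ` set bs" using fst_memI[OF P'] t(5) by simp
    then obtain Gl where m: "(l, Gl) \<in> set bs" using fst_mem[of l bs] by blast
    have ty': "typed (N(s \<mapsto> P', t \<mapsto> P'')) Gl" using t(7)[OF m P' P''] .
    show ?thesis
    proof (cases "\<rho>2 = []")
      case True
      have "is_trace (Comm s t bs) [(s, t, l)]" by (rule tr_one[OF refl m])
      then have tr: "[c] \<in> Tr G" unfolding Tr_def G c' by simp
      have "core \<rho> = [c]" using sp(1) True core_disj[OF disj] by simp
      then have "perm_eq (core [c]) (core \<rho>)" by simp
      then show ?thesis using tr by (rule bexI)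
    next
      case False
      have g': "gok Gl" using gok_sub[OF g m] .
      have b': "bounded Gl" using bounded_sub[OF bd m] .
      have len: "length (\<rho>1 @ \<rho>2) < length \<rho>" using sp(1) by simp
      have ne': "\<rho>1 @ \<rho>2 \<noteq> []" using False by simp
      have "\<exists>\<tau>\<in>Tr Gl. perm_eq (core \<tau>) (core (\<rho>1 @ \<rho>2))"
        using IH[OF len ne' e(5) ty' g' b'] .
      then obtain \<tau>' where \<tau>': "\<tau>' \<in> Tr Gl" "perm_eq (core \<tau>') (core (\<rho>1 @ \<rho>2))"
        by blast
      have tne: "\<tau>' \<noteq> []" using \<tau>'(1) trace_ne unfolding Tr_def by blast
      have "is_trace (Comm s t bs) ((s, t, l) # \<tau>')" using \<tau>'(1) unfolding Tr_def
        by (intro tr_cons[OF refl m]) simp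
      then have tr: "c # \<tau>' \<in> Tr G" unfolding Tr_def G c' by simp
      have "perm_eq (core \<rho>) (cstep c (core (\<rho>1 @ \<rho>2)))"
        using sp(1) core_move[OF disj False] by simp
      also have "perm_eq (cstep c (core (\<rho>1 @ \<rho>2))) (cstep c (core \<tau>'))"
        using cstep_cong[OF perm_eq_sym[OF \<tau>'(2)]] .
      also have "cstep c (core \<tau>') = core (c # \<tau>')" using tne by (simp add: core_cons)
      finally have "perm_eq (core (c # \<tau>')) (core \<rho>)" by (rule perm_eq_sym)
      then show ?thesis using tr by (rule bexI)
    qed
  qed
qed

lemma fid: "\<rho> \<noteq> [] \<Longrightarrow> exec N \<rho> \<Longrightarrow> typed N G \<Longrightarrow> gok G \<Longrightarrow> bounded G \<Longrightarrow>
   \<exists>\<tau>\<in>Tr G. perm_eq (core \<tau>) (core \<rho>)"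
proof (induction "length \<rho>" arbitrary: \<rho> N G rule: less_induct)
  case less
  have "bdd_above (depth (fst (hd \<rho>)) ` Tr G)" using less.prems(5) gsub.gsub_refl
    unfolding bounded_def by metis
  then obtain n where n: "\<forall>\<sigma>\<in>Tr G. depth (fst (hd \<rho>)) \<sigma> \<le> n"
    unfolding bdd_above_def by blast
  show ?case
    apply (rule fid_inner[of \<rho> N G n])
    subgoal for \<rho>' N' G' using less.hyps[of \<rho>' N' G'] by blast
    using less.prems n by simp_all
qed

lemma events_sub:
  assumes "well_formed G" "well_formed G'" "typed N G" "typed N G'"
  shows "events G \<subseteq> events G'"
proof
  fix x assume "x \<in> events G"
  then obtain \<sigma> where s: "\<sigma> \<in> Tr G" "x = ev \<sigma>" unfolding events_def by blast
  have sne: "\<sigma> \<noteq> []" using s(1) trace_ne unfolding Tr_def by blast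
  have "exec N \<sigma>" using trace_exec[of G \<sigma> N] s(1) assms(1,3) wf_gok unfolding Tr_def by blast
  moreover have "gok G'" "bounded G'" using assms(2) wf_gok by (auto simp: well_formed_def)
  ultimately obtain \<tau> where t: "\<tau> \<in> Tr G'" "perm_eq (core \<tau>) (core \<sigma>)"
    using fid[OF sne _ assms(4)] by blast
  have tne: "\<tau> \<noteq> []" using t(1) trace_ne unfolding Tr_def by blast
  have "ev \<tau> = ev \<sigma>" using ev_core[OF tne] ev_core[OF sne] t(2) cls_eq_iff by metis
  then show "x \<in> events G'" using s(2) t(1) unfolding events_def by (metis image_eqI)
qed

theorem mainTheorem2:
  fixes G G' :: "('p, 'l) gty" and N :: "'p \<rightharpoonup> ('p, 'l) proc"
  assumes "well_formed G" and "well_formed G'"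
    and "network_ok N"
    and "typed N G" and "typed N G'"
  shows "evstruct G = evstruct G'"
proof -
  have "events G = events G'"
    using events_sub[OF assms(1,2,4,5)] events_sub[OF assms(2,1,5,4)] by blast
  then show ?thesis unfolding evstruct_def by simp
qed


end
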